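(* Let $P\subset\mathbb{R}^d$ be a finite point set satisfying the standing condition, let $\varepsilon\in(0,1)$, and let $Q_\varepsilon$ be the set returned by the algorithm H-GRMR described in the context on input $P$, its extreme point set $X$, its inner-product Delaunay graph $\mathcal{G}(P)$, and $\varepsilon$. Then $Q_\varepsilon$ is an $\varepsilon$-regret set of $P$, i.e., $l(Q_\varepsilon)\le\varepsilon$.
   Context: For finite $Q\subset\mathbb{R}^d$ and unit $x$, $\omega(x,Q)=\max_{p\in Q}\langle p,x\rangle$. Standing condition: $\omega(x,P)>0$ for all $x\in\mathbb{S}^{d-1}$. Regret ratio $l_x(Q)=1-\omega(x,Q)/\omega(x,P)$; $l(Q)=\max_{x\in\mathbb{S}^{d-1}}l_x(Q)$; $Q\subseteq P$ is an $\varepsilon$-regret set if $l(Q)\le\varepsilon$. Voronoi cell $R(p)=\{x\ne0:\langle p,x\rangle\ge\omega(x,P)\}$; extreme points $X=\{t_1,\dots,t_m\}$ are the points with $R(p)\ne\varnothing$. The inner-product Delaunay graph $\mathcal{G}(P)$ is the undirected graph on $X$ with an edge $\{t_i,t_j\}$ iff $R(t_i)\cap R(t_j)\ne\varnothing$; $N(t)$ denotes the neighbors of $t$. For $t_i,t_j\in X$, $\varepsilon_{ij}$ is the optimal value of the linear program: maximize $1-\langle t_i,x\rangle$ over $x\in\mathbb{R}^d$ subject to $\langle t_j-t,x\rangle\ge0$ for all $t\in N(t_j)$ and $\langle t_j,x\rangle=1$ (with $\varepsilon_{ij}=+\infty$ if unbounded). Algorithm H-GRMR: Step 1: start with a directed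 graph $H_\varepsilon$ on $X$ with no edges; for each $t_i$, mark $t_i$ visited, enqueue all of $N(t_i)$, and while the queue is nonempty dequeue $t_j$; if $t_j$ is not visited, mark it visited, compute $\varepsilon_{ij}$, and if $\varepsilon_{ij}\le\varepsilon$ add edge $t_i\to t_j$ to $H_\varepsilon$ and enqueue all of $N(t_j)$ (visited marks are reset for each $t_i$). Step 2: let $Dom(t_i)=\{t_i\}\cup\{t_j: t_i\to t_j \text{ in } H_\varepsilon\}$; set $Q_\varepsilon=\varnothing$, $U=X$; while $U\ne\varnothing$, pick $t^*\in X\setminus Q_\varepsilon$ maximizing $|Dom(t^* )\cap U|$, add $t^*$ to $Q_\varepsilon$ and remove $Dom(t^* )$ from $U$. Return $Q_\varepsilon$. *)

theory Defs
  imports "HOL-Analysis.Analysis"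
begin

definition omega :: "'a::euclidean_space \<Rightarrow> 'a set \<Rightarrow> real" where
  "omega x Q = Max ((\<lambda>p. p \<bullet> x) ` Q)"

definition regret_ratio :: "'a::euclidean_space set \<Rightarrow> 'a \<Rightarrow> 'a set \<Rightarrow> real" where
  "regret_ratio P x Q = 1 - omega x Q / omega x P"

definition regret :: "'a::euclidean_space set \<Rightarrow> 'a set \<Rightarrow> real" where
  "regret P Q = (SUP x\<in>sphere 0 1. regret_ratio P x Q)"

definition eps_regret_set :: "'a::euclidean_space set \<Rightarrow> 'a set \<Rightarrow> real \<Rightarrow> bool" where
  "eps_regret_set P Q \<epsilon> \<longleftrightarrow> Q \<subseteq> P \<and> regret P Q \<le> \<epsilon>"

definition standing_condition :: "'a::euclidean_space set \<Rightarrow> bool" where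
  "standing_condition P \<longleftrightarrow> (\<forall>x. norm x = 1 \<longrightarrow> omega x P > 0)"

definition voronoi_cell :: "'a::euclidean_space set \<Rightarrow> 'a \<Rightarrow> 'a set" where
  "voronoi_cell P p = {x. x \<noteq> 0 \<and> p \<bullet> x \<ge> omega x P}"

definition extreme_points :: "'a::euclidean_space set \<Rightarrow> 'a set" where
  "extreme_points P = {p \<in> P. voronoi_cell P p \<noteq> {}}"

definition delaunay_nbrs :: "'a::euclidean_space set \<Rightarrow> 'a \<Rightarrow> 'a set" where
  "delaunay_nbrs P t = {t' \<in> extreme_points P. t' \<noteq> t \<and>
      voronoi_cell P t \<inter> voronoi_cell P t' \<noteq> {}}"

text \<open>eps_ij: optimal value of the LP (supremum in the extended reals; +infinity if unbounded).\<close>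
definition eps_lp :: "'a::euclidean_space set \<Rightarrow> 'a \<Rightarrow> 'a \<Rightarrow> ereal" where
  "eps_lp P ti tj = (SUP x\<in>{x. (\<forall>t\<in>delaunay_nbrs P tj. (tj - t) \<bullet> x \<ge> 0) \<and> tj \<bullet> x = 1}.
                        ereal (1 - ti \<bullet> x))"

text \<open>Step 1, BFS from t_i. State: (visited, queue, out-neighbours of t_i in H_eps).
  "Enqueue all of N(t)" appends the elements of N(t) in an arbitrary order.\<close>
inductive bfs_step :: "'a::euclidean_space set \<Rightarrow> real \<Rightarrow> 'a \<Rightarrow>
    'a set \<times> 'a list \<times> 'a set \<Rightarrow> 'a set \<times> 'a list \<times> 'a set \<Rightarrow> bool"
  for P \<epsilon> ti where
  visited: "tj \<in> vis \<Longrightarrow> bfs_step P \<epsilon> ti (vis, tj # q, E) (vis, q, E)"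
| add: "tj \<notin> vis \<Longrightarrow> eps_lp P ti tj \<le> ereal \<epsilon> \<Longrightarrow>
        set L = delaunay_nbrs P tj \<Longrightarrow> distinct L \<Longrightarrow>
        bfs_step P \<epsilon> ti (vis, tj # q, E) (insert tj vis, q @ L, insert tj E)"
| skip: "tj \<notin> vis \<Longrightarrow> \<not> eps_lp P ti tj \<le> ereal \<epsilon> \<Longrightarrow>
        bfs_step P \<epsilon> ti (vis, tj # q, E) (insert tj vis, q, E)"

text \<open>D is a possible value of Dom(t_i) = {t_i} \<union> {t_j. t_i \<rightarrow> t_j in H_eps}.\<close>
definition hgrmr_dom :: "'a::euclidean_space set \<Rightarrow> real \<Rightarrow> 'a \<Rightarrow> 'a set \<Rightarrow> bool" where
  "hgrmr_dom P \<epsilon> ti D \<longleftrightarrow>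
     (\<exists>L0 vis E. set L0 = delaunay_nbrs P ti \<and> distinct L0 \<and>
        (bfs_step P \<epsilon> ti)\<^sup>*\<^sup>* ({ti}, L0, {}) (vis, [], E) \<and> D = insert ti E)"

text \<open>Step 2, greedy. State: (Q_eps, U).\<close>
inductive greedy_step :: "'a::euclidean_space set \<Rightarrow> ('a \<Rightarrow> 'a set) \<Rightarrow>
    'a set \<times> 'a set \<Rightarrow> 'a set \<times> 'a set \<Rightarrow> bool"
  for P Dom where
  pick: "U \<noteq> {} \<Longrightarrow> t \<in> extreme_points P - Q \<Longrightarrow>
         (\<forall>t'\<in>extreme_points P - Q. card (Dom t' \<inter> U) \<le> card (Dom t \<inter> U)) \<Longrightarrow>
         greedy_step P Dom (Q, U) (insert t Q, U - Dom t)"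

definition hgrmr_output :: "'a::euclidean_space set \<Rightarrow> real \<Rightarrow> 'a set \<Rightarrow> bool" where
  "hgrmr_output P \<epsilon> Q \<longleftrightarrow>
     (\<exists>Dom. (\<forall>t\<in>extreme_points P. hgrmr_dom P \<epsilon> t (Dom t)) \<and>
        (greedy_step P Dom)\<^sup>*\<^sup>* ({}, extreme_points P) (Q, {}))"

end

theory Submission
  imports Defs
begin

lemma bfs_inv:
  assumes "(bfs_step P \<epsilon> ti)\<^sup>*\<^sup>* s s'"
    and "\<forall>tj\<in>snd (snd s). eps_lp P ti tj \<le> ereal \<epsilon>"
  shows "\<forall>tj\<in>snd (snd s'). eps_lp P ti tj \<le> ereal \<epsilon>"
  using assms
proof (induction rule: rtranclp_induct)
  case base
  then show ?case by simp
next
  case (step y z)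
  from step.hyps(2) step.IH step.prems show ?case
    by (cases rule: bfs_step.cases) auto
qed

lemma dom_inv:
  assumes "hgrmr_dom P \<epsilon> ti D" "tj \<in> D"
  shows "tj = ti \<or> eps_lp P ti tj \<le> ereal \<epsilon>"
proof -
  obtain L0 vis E where h: "(bfs_step P \<epsilon> ti)\<^sup>*\<^sup>* ({ti}, L0, {}) (vis, [], E)" "D = insert ti E"
    using assms(1) unfolding hgrmr_dom_def by blast
  have "\<forall>tj\<in>snd (snd (vis, [], E)). eps_lp P ti tj \<le> ereal \<epsilon>"
    using bfs_inv[OF h(1)] by simp
  then show ?thesis using h(2) assms(2) by auto
qed

lemma greedy_inv:
  assumes "(greedy_step P Dom)\<^sup>*\<^sup>* s s'"
    and "fst s \<subseteq> extreme_points P"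
    and "\<forall>t\<in>extreme_points P - snd s. \<exists>q\<in>fst s. t \<in> Dom q"
  shows "fst s' \<subseteq> extreme_points P \<and> (\<forall>t\<in>extreme_points P - snd s'. \<exists>q\<in>fst s'. t \<in> Dom q)"
  using assms
proof (induction rule: rtranclp_induct)
  case base
  then show ?case by simp
next
  case (step y z)
  from step.hyps(2) step.IH step.prems show ?case
    by (cases rule: greedy_step.cases) auto
qed

lemma omega_ge:
  assumes "finite Q" "q \<in> Q"
  shows "q \<bullet> x \<le> omega x Q"
  unfolding omega_def using assms by (intro Max_ge) auto

lemma key:
  assumes fin: "finite P" and tP: "t \<in> P" and x1: "x \<noteq> 0"
    and tx: "t \<bullet> x = omega x P" and pos: "omega x P > 0"
    and lp: "eps_lp P q t \<le> ereal \<epsilon>"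
  shows "q \<bullet> x \<ge> (1 - \<epsilon>) * omega x P"
proof -
  define c where "c = omega x P"
  define y where "y = x /\<^sub>R c"
  have cpos: "c > 0" using pos c_def by simp
  have ty: "t \<bullet> y = 1" using tx cpos by (simp add: y_def c_def)
  have nb: "\<forall>t'\<in>delaunay_nbrs P t. (t - t') \<bullet> y \<ge> 0"
  proof
    fix t' assume "t' \<in> delaunay_nbrs P t"
    then have "t' \<in> P" unfolding delaunay_nbrs_def extreme_points_def by auto
    then have "t' \<bullet> x \<le> c" using omega_ge[OF fin] c_def by auto
    then have h0: "0 \<le> (t \<bullet> x - t' \<bullet> x) * inverse c" using tx c_def cpos by simp
    have "(t - t') \<bullet> y = (t \<bullet> x - t' \<bullet> x) * inverse c"
      by (simp add: y_def inner_diff_left algebra_simps)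
    then show "(t - t') \<bullet> y \<ge> 0" using h0 by simp
  qed
  have "ereal (1 - q \<bullet> y) \<le> eps_lp P q t"
    unfolding eps_lp_def by (rule SUP_upper) (use nb ty in auto)
  then have "1 - q \<bullet> y \<le> \<epsilon>" using lp by (meson ereal_less_eq(3) order_trans)
  then have "1 - (q \<bullet> x) / c \<le> \<epsilon>" by (simp add: y_def divide_inverse mult.commute)
  then have "c - q \<bullet> x \<le> \<epsilon> * c" using cpos by (simp add: field_simps)
  then show ?thesis unfolding c_def[symmetric] by (simp add: algebra_simps)
qed

theorem theorem4:
  fixes P :: "'a::euclidean_space set" and \<epsilon> :: real and Q :: "'a set"
  assumes "finite P" and "P \<noteq> {}" and "standing_condition P"
    and "0 < \<epsilon>" and "\<epsilon> < 1"
    and "hgrmr_output P \<epsilon> Q"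
  shows "eps_regret_set P Q \<epsilon>"
proof -
  obtain Dom where D: "\<forall>t\<in>extreme_points P. hgrmr_dom P \<epsilon> t (Dom t)"
    and G: "(greedy_step P Dom)\<^sup>*\<^sup>* ({}, extreme_points P) (Q, {})"
    using assms(6) unfolding hgrmr_output_def by blast
  have inv: "Q \<subseteq> extreme_points P \<and> (\<forall>t\<in>extreme_points P. \<exists>q\<in>Q. t \<in> Dom q)"
    using greedy_inv[OF G] by simp
  have XP: "extreme_points P \<subseteq> P" unfolding extreme_points_def by auto
  have QP: "Q \<subseteq> P" using inv XP by auto
  have finQ: "finite Q" using QP assms(1) finite_subset by blast
  have pt: "regret_ratio P x Q \<le> \<epsilon>" if x: "x \<in> sphere 0 1" for x
  proof -
    have n1: "norm x = 1" using x by simp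
    then have x0: "x \<noteq> 0" by auto
    have pos: "omega x P > 0" using assms(3) n1 unfolding standing_condition_def by blast
    have "omega x P \<in> (\<lambda>p. p \<bullet> x) ` P" unfolding omega_def
      using assms(1,2) by (intro Max_in) auto
    then obtain t where tP: "t \<in> P" and tx: "t \<bullet> x = omega x P" by auto
    have tX: "t \<in> extreme_points P" unfolding extreme_points_def voronoi_cell_def
      using tP tx x0 by auto
    then obtain q where qQ: "q \<in> Q" and tD: "t \<in> Dom q" using inv by blast
    have qX: "q \<in> extreme_points P" using qQ inv by auto
    have "q \<bullet> x \<ge> (1 - \<epsilon>) * omega x P"
    proof (cases "t = q")
      case True
      then show ?thesis using tx pos assms(4) by (simp add: algebra_simps)
    next
      case False
      then have "eps_lp P q t \<le> ereal \<epsilon>" using dom_inv[OF D[rule_format, OF qX] tD] by auto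
      then show ?thesis using key[OF assms(1) tP x0 tx pos] by blast
    qed
    then have "omega x Q \<ge> (1 - \<epsilon>) * omega x P" using omega_ge[OF finQ qQ, of x] by linarith
    then have "omega x Q / omega x P \<ge> 1 - \<epsilon>" using pos by (simp add: field_simps)
    then show ?thesis unfolding regret_ratio_def by linarith
  qed
  have ne: "sphere (0::'a) 1 \<noteq> {}"
  proof -
    obtain b :: 'a where "b \<in> Basis" using nonempty_Basis by blast
    then have "b \<in> sphere 0 1" by simp
    then show ?thesis by blast
  qed
  have "regret P Q \<le> \<epsilon>" unfolding regret_def
    using ne pt by (intro cSUP_least) auto
  then show ?thesis unfolding eps_regret_set_def using QP by simp
qed

end
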